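(* Let $n\geq 1$ be an integer. The cyclic subgroup commutativity degree of the dicyclic group $Dic_{4n}$ is $$csd(Dic_{4n})=\begin{cases}\dfrac{\tau(2n)(\tau(2n)+n)+n(\tau(2n)+1)}{(\tau(2n)+n)^2}, & \text{if } n\equiv 1 \pmod 2,\\[2ex] \dfrac{\tau(2n)(\tau(2n)+n)+n(\tau(2n)+2)}{(\tau(2n)+n)^2}, & \text{if } n\equiv 0 \pmod 2.\end{cases}$$
   Context: For a finite group $G$, $L_1(G)$ denotes the set of cyclic subgroups of $G$, and the cyclic subgroup commutativity degree is $csd(G)=\frac{1}{|L_1(G)|^2}|\{(H,K)\in L_1(G)^2: HK=KH\}|$. $\tau(k)$ is the number of positive divisors of $k$. The dicyclic group is $Dic_{4n}=\langle a,\gamma\mid a^{2n}=e,\ \gamma^2=a^n,\ \gamma^{-1}a\gamma=a^{-1}\rangle$. *)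

theory Defs
  imports "HOL-Algebra.Algebra"
begin

definition cyclic_subgroups :: "('a, 'b) monoid_scheme \<Rightarrow> 'a set set" where
  "cyclic_subgroups G = (\<lambda>x. generate G {x}) ` carrier G"

definition csd :: "('a, 'b) monoid_scheme \<Rightarrow> real" where
  "csd G = real (card {(H, K). H \<in> cyclic_subgroups G \<and> K \<in> cyclic_subgroups G \<and>
                         set_mult G H K = set_mult G K H})
           / real (card (cyclic_subgroups G)) ^ 2"

definition tau :: "nat \<Rightarrow> nat" where
  "tau k = card {d. d dvd k \<and> d > 0}"

text \<open>Dicyclic group Dic_{4n} = <a, g | a^{2n}=e, g^2=a^n, g^{-1} a g = a^{-1}>,
  realized concretely: the pair (i, b) stands for a^i g^b, with 0 \<le> i < 2n.
  Multiplication: a^i a^j g^t = a^{i+j} g^t;  a^i g a^j = a^{i-j} g;  a^i g a^j g = a^{i-j+n}.\<close>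
definition dic_mult :: "nat \<Rightarrow> int \<times> bool \<Rightarrow> int \<times> bool \<Rightarrow> int \<times> bool" where
  "dic_mult n x y = (case x of (i, s) \<Rightarrow> case y of (j, t) \<Rightarrow>
     if \<not> s then ((i + j) mod (2 * int n), t)
     else if \<not> t then ((i - j) mod (2 * int n), True)
     else ((i - j + int n) mod (2 * int n), False))"

definition Dic :: "nat \<Rightarrow> (int \<times> bool) monoid" where
  "Dic n = \<lparr> carrier = {0..<2 * int n} \<times> UNIV, monoid.mult = dic_mult n, one = (0, False) \<rparr>"

end

theory Submission
  imports Defs
begin


lemma dic_mult_simps:
  "dic_mult n (i, False) (j, t) = ((i + j) mod (2 * int n), t)"
  "dic_mult n (i, True) (j, False) = ((i - j) mod (2 * int n), True)"
  "dic_mult n (i, True) (j, True) = ((i - j + int n) mod (2 * int n), False)"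
  by (simp_all add: dic_mult_def)

lemma Dic_simps: "carrier (Dic n) = {0..<2 * int n} \<times> UNIV"
  "x \<otimes>\<^bsub>Dic n\<^esub> y = dic_mult n x y" "\<one>\<^bsub>Dic n\<^esub> = (0, False)"
  by (simp_all add: Dic_def)

lemma modh1: "(c + a mod m - k) mod m = (c + a - k) mod (m::int)"
proof -
  have "(c + a mod m - k) mod m = (a mod m + (c - k)) mod m" by (simp add: algebra_simps)
  also have "\<dots> = (a + (c - k)) mod m" by (simp add: mod_add_left_eq)
  finally show ?thesis by (simp add: algebra_simps)
qed

lemma modh3: "(a mod m - b + c) mod m = (a - b + c) mod (m::int)"
proof -
  have "(a mod m - b + c) mod m = (a mod m + (c - b)) mod m" by (simp add: algebra_simps)
  also have "\<dots> = (a + (c - b)) mod m" by (simp add: mod_add_left_eq)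
  finally show ?thesis by (simp add: algebra_simps)
qed

lemma modh2: "m dvd a - b \<Longrightarrow> a mod m = b mod (m::int)"
  by (simp add: mod_eq_dvd_iff)

lemma dic_group: assumes "n \<ge> 1" shows "group (Dic n)"
proof (rule groupI)
  show "x \<otimes>\<^bsub>Dic n\<^esub> y \<in> carrier (Dic n)" for x y
    using assms by (auto simp: Dic_simps dic_mult_def split: prod.splits)
  show "\<one>\<^bsub>Dic n\<^esub> \<in> carrier (Dic n)" using assms by (simp add: Dic_simps)
  show "x \<otimes>\<^bsub>Dic n\<^esub> y \<otimes>\<^bsub>Dic n\<^esub> z = x \<otimes>\<^bsub>Dic n\<^esub> (y \<otimes>\<^bsub>Dic n\<^esub> z)" for x y z
  proof -
    obtain i s j t k u where "x = (i, s)" "y = (j, t)" "z = (k, u)" by (metis prod.exhaust)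
    then show ?thesis
      by (cases s; cases t; cases u) (simp_all add: Dic_simps dic_mult_simps mod_simps algebra_simps modh1, rule modh2, simp)
  qed
  show "\<one>\<^bsub>Dic n\<^esub> \<otimes>\<^bsub>Dic n\<^esub> x = x" if "x \<in> carrier (Dic n)" for x
    using that by (auto simp: Dic_simps dic_mult_simps)
  show "\<exists>y\<in>carrier (Dic n). y \<otimes>\<^bsub>Dic n\<^esub> x = \<one>\<^bsub>Dic n\<^esub>" if "x \<in> carrier (Dic n)" for x
  proof -
    obtain i s where x: "x = (i, s)" by (metis prod.exhaust)
    show ?thesis
    proof (cases s)
      case True
      show ?thesis using assms
        by (intro bexI[of _ "((i + int n) mod (2 * int n), True)"]) (auto simp: x True Dic_simps dic_mult_simps modh3)
    next
      case False
      show ?thesis using assms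
        by (intro bexI[of _ "((- i) mod (2 * int n), False)"]) (auto simp: x False Dic_simps dic_mult_simps mod_simps)
    qed
  qed
qed
definition Asg :: "nat \<Rightarrow> int \<Rightarrow> (int \<times> bool) set" where
  "Asg n d = {(i, False) | i. 0 \<le> i \<and> i < 2 * int n \<and> d dvd i}"

definition Bsg :: "nat \<Rightarrow> int \<Rightarrow> (int \<times> bool) set" where
  "Bsg n j = {(0, False), (int n, False), (j, True), (j + int n, True)}"

lemma gen_sub:
  assumes "\<one>\<^bsub>G\<^esub> \<in> H" "x \<in> H" "inv\<^bsub>G\<^esub> x \<in> H" "\<And>a b. a \<in> H \<Longrightarrow> b \<in> H \<Longrightarrow> a \<otimes>\<^bsub>G\<^esub> b \<in> H"
  shows "generate G {x} \<subseteq> H"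
proof
  fix y assume "y \<in> generate G {x}"
  then show "y \<in> H" by (induction rule: generate.induct) (use assms in auto)
qed

lemma inv_F: assumes "n \<ge> 1" "0 \<le> i" "i < 2 * int n"
  shows "inv\<^bsub>Dic n\<^esub> (i, False) = ((- i) mod (2 * int n), False)"
  using assms by (intro group.inv_equality[OF dic_group[OF assms(1)]]) (auto simp: Dic_simps dic_mult_simps mod_simps)

lemma inv_T: assumes "n \<ge> 1" "0 \<le> i" "i < 2 * int n"
  shows "inv\<^bsub>Dic n\<^esub> (i, True) = ((i + int n) mod (2 * int n), True)"
  using assms by (intro group.inv_equality[OF dic_group[OF assms(1)]]) (auto simp: Dic_simps dic_mult_simps modh3)

lemma pow_in: "((int m * i) mod (2 * int n), False) \<in> generate (Dic n) {(i, False)}"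
proof (induction m)
  case 0
  then show ?case using generate.one[of "Dic n" "{(i, False)}"] by (simp add: Dic_simps)
next
  case (Suc m)
  have "dic_mult n ((int m * i) mod (2 * int n), False) (i, False) \<in> generate (Dic n) {(i, False)}"
    using generate.eng[OF Suc generate.incl[of "(i, False)"]] by (simp add: Dic_simps)
  then show ?case by (simp add: dic_mult_simps mod_simps algebra_simps)
qed

lemma gen_F: assumes "n \<ge> 1" "0 \<le> i" "i < 2 * int n"
  shows "generate (Dic n) {(i, False)} = Asg n (gcd i (2 * int n))"
proof
  show "generate (Dic n) {(i, False)} \<subseteq> Asg n (gcd i (2 * int n))"
  proof (rule gen_sub)
    show "\<one>\<^bsub>Dic n\<^esub> \<in> Asg n (gcd i (2 * int n))" using assms by (simp add: Dic_simps Asg_def)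
    show "(i, False) \<in> Asg n (gcd i (2 * int n))" using assms by (simp add: Asg_def)
    show "inv\<^bsub>Dic n\<^esub> (i, False) \<in> Asg n (gcd i (2 * int n))"
      using assms by (simp add: inv_F Asg_def dvd_mod)
    show "a \<otimes>\<^bsub>Dic n\<^esub> b \<in> Asg n (gcd i (2 * int n))"
      if "a \<in> Asg n (gcd i (2 * int n))" "b \<in> Asg n (gcd i (2 * int n))" for a b
      using that assms by (auto simp: Asg_def Dic_simps dic_mult_simps dvd_mod)
  qed
  show "Asg n (gcd i (2 * int n)) \<subseteq> generate (Dic n) {(i, False)}"
  proof
    fix y assume "y \<in> Asg n (gcd i (2 * int n))"
    then obtain k where y: "y = (k, False)" "0 \<le> k" "k < 2 * int n" "gcd i (2 * int n) dvd k"
      by (auto simp: Asg_def)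
    obtain c where c: "k = gcd i (2 * int n) * c" using y(4) by (auto elim: dvdE)
    obtain u v where uv: "u * i + v * (2 * int n) = gcd i (2 * int n)" using bezout_int by blast
    have e: "k = (c * u) * i + (c * v) * (2 * int n)"
    proof -
      have "k = c * (u * i + v * (2 * int n))" using c uv by (simp add: mult.commute)
      then show ?thesis by (simp only: distrib_left mult.assoc)
    qed
    have "k = k mod (2 * int n)" using y by simp
    also have "\<dots> = ((c * u) * i + (c * v) * (2 * int n)) mod (2 * int n)" by (metis e)
    also have "\<dots> = ((c * u) * i) mod (2 * int n)" by simp
    also have "\<dots> = (((c * u) mod (2 * int n)) * i) mod (2 * int n)" by (simp add: mod_simps)
    also have "\<dots> = (int (nat ((c * u) mod (2 * int n))) * i) mod (2 * int n)" using assms by simp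
    finally show "y \<in> generate (Dic n) {(i, False)}" using pow_in y(1) by metis
  qed
qed



lemma modA: "0 \<le> j \<Longrightarrow> j < int n \<Longrightarrow> (j - int n) mod (2 * int n) = j + int n"
proof -
  assume a: "0 \<le> j" "j < int n"
  have "(j - int n) mod (2 * int n) = ((j + int n) + (-1) * (2 * int n)) mod (2 * int n)" by (simp add: algebra_simps)
  also have "\<dots> = (j + int n) mod (2 * int n)" by (rule mod_mult_self1)
  also have "\<dots> = j + int n" using a by (simp add: mod_pos_pos_trivial)
  finally show ?thesis .
qed

lemma modB: "int n \<le> i \<Longrightarrow> i < 2 * int n \<Longrightarrow> i mod int n = i - int n"
proof -
  assume a: "int n \<le> i" "i < 2 * int n"
  have "(i - int n) mod int n = i - int n" using a by (intro mod_pos_pos_trivial) auto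
  moreover have "(i - int n) mod int n = i mod int n" by (simp add: mod_diff_left_eq[symmetric])
  ultimately show ?thesis by simp
qed
lemma modC: "int n \<le> i \<Longrightarrow> i < 2 * int n \<Longrightarrow> (i + int n) mod (2 * int n) = i - int n"
proof -
  assume a: "int n \<le> i" "i < 2 * int n"
  have "(i - int n) mod (2 * int n) = i - int n" using a by (intro mod_pos_pos_trivial) auto
  moreover have "(i - int n + 2 * int n) mod (2 * int n) = (i - int n) mod (2 * int n)" by (rule mod_add_self2)
  moreover have "i + int n = i - int n + 2 * int n" by simp
  ultimately show ?thesis by metis
qed

lemma B_closed: assumes "0 \<le> j" "j < int n" "a \<in> Bsg n j" "b \<in> Bsg n j"
  shows "dic_mult n a b \<in> Bsg n j"
  using assms by (auto simp: Bsg_def dic_mult_simps modA)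

lemma gen_T: assumes "n \<ge> 1" "0 \<le> i" "i < 2 * int n"
  shows "generate (Dic n) {(i, True)} = Bsg n (i mod int n)"
proof
  have jr: "0 \<le> i mod int n" "i mod int n < int n" using assms by auto
  have imem: "(i, True) \<in> Bsg n (i mod int n)"
    using assms by (cases "i < int n") (auto simp: Bsg_def mod_pos_pos_trivial modB)
  show "generate (Dic n) {(i, True)} \<subseteq> Bsg n (i mod int n)"
  proof (rule gen_sub)
    show "\<one>\<^bsub>Dic n\<^esub> \<in> Bsg n (i mod int n)" by (simp add: Dic_simps Bsg_def)
    show "(i, True) \<in> Bsg n (i mod int n)" by (rule imem)
    show "inv\<^bsub>Dic n\<^esub> (i, True) \<in> Bsg n (i mod int n)"
      using assms by (simp add: inv_T) (cases "i < int n"; auto simp: Bsg_def mod_pos_pos_trivial modB modC)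
    show "a \<otimes>\<^bsub>Dic n\<^esub> b \<in> Bsg n (i mod int n)"
      if "a \<in> Bsg n (i mod int n)" "b \<in> Bsg n (i mod int n)" for a b
      using B_closed[OF jr that] by (simp add: Dic_simps)
  qed
  let ?x = "(i, True)"
  let ?g = "generate (Dic n) {(i, True)}"
  have g1: "?x \<in> ?g" by (rule generate.incl) simp
  have g0: "(0, False) \<in> ?g" using generate.one[of "Dic n"] by (simp add: Dic_simps)
  have g2: "dic_mult n ?x ?x \<in> ?g" using generate.eng[OF g1 g1] by (simp add: Dic_simps)
  have g3: "dic_mult n (dic_mult n ?x ?x) ?x \<in> ?g" using generate.eng[OF g2 g1] by (simp add: Dic_simps)
  have e2: "dic_mult n ?x ?x = (int n, False)" using assms by (simp add: dic_mult_simps)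
  show "Bsg n (i mod int n) \<subseteq> ?g"
  proof (cases "i < int n")
    case True
    then show ?thesis using g0 g1 g2 g3 assms e2
      by (auto simp: Bsg_def dic_mult_simps mod_pos_pos_trivial add.commute)
  next
    case False
    have "i mod int n = i - int n" using False assms by (intro modB) auto
    moreover have "(int n + i) mod (2 * int n) = i - int n" using False assms modC[of n i] by (simp add: add.commute)
    ultimately show ?thesis using g0 g1 g2 g3 assms e2
      by (auto simp: Bsg_def dic_mult_simps)
  qed
qed



definition Dv :: "nat \<Rightarrow> int set" where "Dv n = {d. 0 < d \<and> d dvd 2 * int n}"

lemma cyc_eq: assumes "n \<ge> 1"
  shows "cyclic_subgroups (Dic n) = Asg n ` Dv n \<union> Bsg n ` {0..<int n}"
proof
  show "cyclic_subgroups (Dic n) \<subseteq> Asg n ` Dv n \<union> Bsg n ` {0..<int n}"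
  proof
    fix H assume "H \<in> cyclic_subgroups (Dic n)"
    then obtain i s where x: "0 \<le> i" "i < 2 * int n" "H = generate (Dic n) {(i, s)}"
      by (auto simp: cyclic_subgroups_def Dic_simps)
    show "H \<in> Asg n ` Dv n \<union> Bsg n ` {0..<int n}"
    proof (cases s)
      case True
      then show ?thesis using x assms gen_T[OF assms x(1,2)] by auto
    next
      case False
      have "gcd i (2 * int n) \<in> Dv n" using assms by (auto simp: Dv_def)
      then show ?thesis using False x gen_F[OF assms x(1,2)] by auto
    qed
  qed
  show "Asg n ` Dv n \<union> Bsg n ` {0..<int n} \<subseteq> cyclic_subgroups (Dic n)"
  proof
    fix H assume "H \<in> Asg n ` Dv n \<union> Bsg n ` {0..<int n}"
    then consider d where "d \<in> Dv n" "H = Asg n d" | j where "0 \<le> j" "j < int n" "H = Bsg n j" by auto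
    then show "H \<in> cyclic_subgroups (Dic n)"
    proof cases
      case 1
      have np: "0 < 2 * int n" using assms by simp
      have "gcd (d mod (2 * int n)) (2 * int n) = gcd d (2 * int n)"
        using gcd_non_0_int[OF np, of d] by (simp add: gcd.commute)
      also have "\<dots> = d" using 1 by (simp add: Dv_def)
      finally have "H = generate (Dic n) {(d mod (2 * int n), False)}"
        using 1 gen_F[OF assms, of "d mod (2 * int n)"] np by simp
      then show ?thesis using np by (auto simp: cyclic_subgroups_def Dic_simps)
    next
      case 2
      then have "H = generate (Dic n) {(j, True)}" using gen_T[OF assms, of j] by simp
      then show ?thesis using 2 by (auto simp: cyclic_subgroups_def Dic_simps)
    qed
  qed
qed

lemma card_Dv: "card (Dv n) = tau (2 * n)"
proof -
  have "Dv n = int ` {d. d dvd 2 * n \<and> d > 0}"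
  proof
    show "Dv n \<subseteq> int ` {d. d dvd 2 * n \<and> d > 0}"
    proof
      fix d assume "d \<in> Dv n"
      then have "0 < d" "d dvd 2 * int n" by (auto simp: Dv_def)
      then have "d = int (nat d)" "nat d dvd 2 * n" "nat d > 0"
        by (simp_all add: int_dvd_int_iff[symmetric])
      then show "d \<in> int ` {d. d dvd 2 * n \<and> d > 0}" by blast
    qed
    show "int ` {d. d dvd 2 * n \<and> d > 0} \<subseteq> Dv n"
      by (auto simp: Dv_def) (metis int_dvd_int_iff of_nat_mult of_nat_numeral)
  qed
  then show ?thesis by (simp add: tau_def card_image)
qed

lemma Asg_inj: assumes "n \<ge> 1" shows "inj_on (Asg n) (Dv n)"
proof -
  have sub: "d dvd d'" if h1: "d \<in> Dv n" and h2: "d' \<in> Dv n" and h3: "Asg n d = Asg n d'" for d d'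
  proof (cases "d' < 2 * int n")
    case True
    have "0 < d'" using h2 by (simp add: Dv_def)
    then have "(d', False) \<in> Asg n d'" using True unfolding Asg_def by auto
    then have "(d', False) \<in> Asg n d" using h3 by simp
    then show ?thesis by (simp add: Asg_def)
  next
    case False
    have "d' dvd 2 * int n" "0 < 2 * int n" using h2 assms by (auto simp: Dv_def)
    then have "d' \<le> 2 * int n" by (rule zdvd_imp_le)
    then have "d' = 2 * int n" using False by simp
    then show ?thesis using h1 by (simp add: Dv_def)
  qed
  show ?thesis
  proof (rule inj_onI)
    fix d d' assume a: "d \<in> Dv n" "d' \<in> Dv n" "Asg n d = Asg n d'"
    have "d dvd d'" by (rule sub[OF a])
    moreover have "d' dvd d" by (rule sub[OF a(2) a(1) a(3)[symmetric]])
    moreover have "0 \<le> d" "0 \<le> d'" using a(1,2) by (auto simp: Dv_def)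
    ultimately show "d = d'" using zdvd_antisym_nonneg by blast
  qed
qed


lemma Bsg_inj: "inj_on (Bsg n) {0..<int n}"
proof (rule inj_onI)
  fix j j' assume a: "j \<in> {0..<int n}" "j' \<in> {0..<int n}" "Bsg n j = Bsg n j'"
  have "(j, True) \<in> Bsg n j" by (simp add: Bsg_def)
  with a(3) have "(j, True) \<in> Bsg n j'" by simp
  then have "j = j' \<or> j = j' + int n" by (auto simp: Bsg_def)
  then show "j = j'" using a(1,2) by auto
qed

lemma AB_disj: "Asg n ` SX \<inter> Bsg n ` SY = {}"
proof -
  have "P1 \<noteq> P2" if h1: "P1 \<in> Asg n ` SX" and h2: "P2 \<in> Bsg n ` SY" for P1 P2
  proof -
    obtain j where "P2 = Bsg n j" using h2 by blast
    then have "(j, True) \<in> P2" by (simp add: Bsg_def)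
    moreover have "(j, True) \<notin> P1" using h1 by (auto simp: Asg_def)
    ultimately show ?thesis by blast
  qed
  then show ?thesis by blast
qed




lemma A_normal1: assumes "d dvd 2 * int n" "h \<in> Asg n d" "k \<in> carrier (Dic n)"
  shows "\<exists>h'\<in>Asg n d. dic_mult n h k = dic_mult n k h'"
proof -
  obtain a where h: "h = (a, False)" "0 \<le> a" "a < 2 * int n" "d dvd a" using assms(2) by (auto simp: Asg_def)
  obtain b s where k: "k = (b, s)" by (metis prod.exhaust)
  show ?thesis
  proof (cases s)
    case False
    then show ?thesis using h k assms(2) by (intro bexI[of _ h]) (auto simp: dic_mult_simps add.commute)
  next
    case True
    have mem: "((- a) mod (2 * int n), False) \<in> Asg n d"
      using h assms(1) by (auto simp: Asg_def dvd_mod)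
    show ?thesis using h k True
      by (intro bexI[OF _ mem]) (simp add: dic_mult_simps mod_diff_right_eq add.commute)
  qed
qed

lemma A_normal2: assumes "d dvd 2 * int n" "h \<in> Asg n d" "k \<in> carrier (Dic n)"
  shows "\<exists>h'\<in>Asg n d. dic_mult n k h = dic_mult n h' k"
proof -
  obtain a where h: "h = (a, False)" "0 \<le> a" "a < 2 * int n" "d dvd a" using assms(2) by (auto simp: Asg_def)
  obtain b s where k: "k = (b, s)" by (metis prod.exhaust)
  show ?thesis
  proof (cases s)
    case False
    then show ?thesis using h k assms(2) by (intro bexI[of _ h]) (auto simp: dic_mult_simps add.commute)
  next
    case True
    have mem: "((- a) mod (2 * int n), False) \<in> Asg n d"
      using h assms(1) by (auto simp: Asg_def dvd_mod)
    show ?thesis using h k True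
      by (intro bexI[OF _ mem]) (simp add: dic_mult_simps mod_add_left_eq)
  qed
qed

lemma A_comm: assumes "d dvd 2 * int n" "K \<subseteq> carrier (Dic n)"
  shows "set_mult (Dic n) (Asg n d) K = set_mult (Dic n) K (Asg n d)"
proof
  show "set_mult (Dic n) (Asg n d) K \<subseteq> set_mult (Dic n) K (Asg n d)"
  proof
    fix x assume "x \<in> set_mult (Dic n) (Asg n d) K"
    then obtain h k where hk: "h \<in> Asg n d" "k \<in> K" "x = dic_mult n h k" by (auto simp: set_mult_def Dic_simps)
    obtain h' where "h' \<in> Asg n d" "dic_mult n h k = dic_mult n k h'"
      using A_normal1[OF assms(1) hk(1)] hk(2) assms(2) by blast
    then show "x \<in> set_mult (Dic n) K (Asg n d)" using hk by (auto simp: set_mult_def Dic_simps)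
  qed
  show "set_mult (Dic n) K (Asg n d) \<subseteq> set_mult (Dic n) (Asg n d) K"
  proof
    fix x assume "x \<in> set_mult (Dic n) K (Asg n d)"
    then obtain h k where hk: "h \<in> Asg n d" "k \<in> K" "x = dic_mult n k h" by (auto simp: set_mult_def Dic_simps)
    obtain h' where "h' \<in> Asg n d" "dic_mult n k h = dic_mult n h' k"
      using A_normal2[OF assms(1) hk(1)] hk(2) assms(2) by blast
    then show "x \<in> set_mult (Dic n) (Asg n d) K" using hk by (auto simp: set_mult_def Dic_simps)
  qed
qed

lemma small_dvd: assumes "n \<ge> 1" "\<bar>t\<bar> < int n" "int n dvd 2 * t"
  shows "t = 0 \<or> 2 * t = int n \<or> 2 * t = - int n"
proof -
  obtain c where c: "2 * t = int n * c" using assms(3) by (auto elim: dvdE)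
  have "int n * \<bar>c\<bar> < int n * 2" using assms(2) c by (simp add: abs_mult[symmetric])
  then have "\<bar>c\<bar> < 2" using assms(1) by (simp add: mult_less_cancel_left_pos)
  then have "c = 0 \<or> c = 1 \<or> c = -1" by auto
  then show ?thesis using c by auto
qed




lemma set_mult_img: "set_mult G H K = (\<lambda>(h, k). h \<otimes>\<^bsub>G\<^esub> k) ` (H \<times> K)"
  by (auto simp: set_mult_def)

lemma B_prod: assumes "0 \<le> i" "i < int n" "0 \<le> j" "j < int n"
  shows "set_mult (Dic n) (Bsg n i) (Bsg n j) =
    {(0, False), (int n, False), ((i - j) mod (2 * int n), False), ((i - j + int n) mod (2 * int n), False),
     (i, True), (i + int n, True), (j, True), (j + int n, True)}"
proof -
  have m1: "(i - int n) mod (2 * int n) = i + int n" using assms modA by blast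
  have m2: "(int n + (j + int n)) mod (2 * int n) = j"
  proof -
    have "int n + (j + int n) = j + 1 * (2 * int n)" by simp
    then show ?thesis using assms by (simp add: mod_pos_pos_trivial del: mod_mult_self1)
  qed
  have m3: "(i + int n - j + int n) mod (2 * int n) = (i - j) mod (2 * int n)"
    by (rule modh2) simp
  have m4: "(i - (j + int n) + int n) mod (2 * int n) = (i - j) mod (2 * int n)" by simp
  have m5: "(i + int n - (j + int n) + int n) mod (2 * int n) = (i - j + int n) mod (2 * int n)" by simp
  show ?thesis unfolding set_mult_img Bsg_def Dic_simps
    using assms m1 m2 m3 m4 m5 add.commute[of "int n" j] by (simp add: dic_mult_simps mod_pos_pos_trivial insert_commute) (auto simp: add.commute)
qed




lemma hd: "(a::int) mod (2 * m) = b mod (2 * m) \<Longrightarrow> m dvd a - b"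
  by (metis dvd_mult_right mod_eq_dvd_iff)

lemma B_comm_iff: assumes "n \<ge> 1" "0 \<le> i" "i < int n" "0 \<le> j" "j < int n"
  shows "set_mult (Dic n) (Bsg n i) (Bsg n j) = set_mult (Dic n) (Bsg n j) (Bsg n i) \<longleftrightarrow> int n dvd 2 * (i - j)"
proof
  assume eq: "set_mult (Dic n) (Bsg n i) (Bsg n j) = set_mult (Dic n) (Bsg n j) (Bsg n i)"
  have "((i - j) mod (2 * int n), False) \<in> set_mult (Dic n) (Bsg n i) (Bsg n j)"
    using B_prod[OF assms(2-5)] by simp
  then have "((i - j) mod (2 * int n), False) \<in> set_mult (Dic n) (Bsg n j) (Bsg n i)"
    using eq by simp
  then have "(i - j) mod (2 * int n) = 0 mod (2 * int n) \<or> (i - j) mod (2 * int n) = int n mod (2 * int n) \<or>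
      (i - j) mod (2 * int n) = (j - i) mod (2 * int n) \<or> (i - j) mod (2 * int n) = (j - i + int n) mod (2 * int n)"
    using B_prod[OF assms(4,5,2,3)] assms by auto
  then show "int n dvd 2 * (i - j)"
  proof (elim disjE)
    assume "(i - j) mod (2 * int n) = 0 mod (2 * int n)"
    then have "int n dvd (i - j) - 0" by (rule hd)
    then show ?thesis by (intro dvd_mult) simp
  next
    assume "(i - j) mod (2 * int n) = int n mod (2 * int n)"
    then have "int n dvd (i - j) - int n" by (rule hd)
    then have "int n dvd (i - j)" by (metis dvd_refl dvd_add diff_add_cancel)
    then show ?thesis by (rule dvd_mult)
  next
    assume "(i - j) mod (2 * int n) = (j - i) mod (2 * int n)"
    then have "int n dvd (i - j) - (j - i)" by (rule hd)
    moreover have "(i - j) - (j - i) = 2 * (i - j)" by simp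
    ultimately show ?thesis by simp
  next
    assume "(i - j) mod (2 * int n) = (j - i + int n) mod (2 * int n)"
    then have "int n dvd (i - j) - (j - i + int n)" by (rule hd)
    then have "int n dvd 2 * (i - j) - int n" by (simp add: algebra_simps)
    then show ?thesis by (metis dvd_refl dvd_add diff_add_cancel)
  qed
next
  assume dv: "int n dvd 2 * (i - j)"
  have "\<bar>i - j\<bar> < int n" using assms by auto
  then have c: "i - j = 0 \<or> 2 * (i - j) = int n \<or> 2 * (i - j) = - int n"
    using small_dvd[OF assms(1) _ dv] by blast
  show "set_mult (Dic n) (Bsg n i) (Bsg n j) = set_mult (Dic n) (Bsg n j) (Bsg n i)"
  proof (cases "i = j")
    case True then show ?thesis by simp
  next
    case False
    then have c2: "2 * (i - j) = int n \<or> 2 * (i - j) = - int n" using c by auto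
    have e1: "(j - i) mod (2 * int n) = (i - j + int n) mod (2 * int n)"
    proof (rule modh2)
      have "(j - i) - (i - j + int n) = 2 * int n * (-1) \<or> (j - i) - (i - j + int n) = 2 * int n * 0"
        using c2 by auto
      then show "2 * int n dvd (j - i) - (i - j + int n)" by (metis dvd_triv_left)
    qed
    have e2: "(j - i + int n) mod (2 * int n) = (i - j) mod (2 * int n)"
    proof (rule modh2)
      have "(j - i + int n) - (i - j) = 2 * int n * 0 \<or> (j - i + int n) - (i - j) = 2 * int n * 1"
        using c2 by auto
      then show "2 * int n dvd (j - i + int n) - (i - j)" by (metis dvd_triv_left)
    qed
    show ?thesis unfolding B_prod[OF assms(2-5)] B_prod[OF assms(4,5,2,3)] e1 e2 by auto
  qed
qed




lemma Dv_finite: assumes "n \<ge> 1" shows "finite (Dv n)"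
proof (rule finite_subset)
  show "Dv n \<subseteq> {0..2 * int n}"
  proof
    fix d assume "d \<in> Dv n"
    then have "0 < d" "d dvd 2 * int n" by (auto simp: Dv_def)
    then show "d \<in> {0..2 * int n}"
      using assms by (auto dest: zdvd_imp_le)
  qed
qed simp

lemma Asg_carrier: "Asg n d \<subseteq> carrier (Dic n)"
  by (auto simp: Asg_def Dic_simps)

lemma Bsg_carrier: "n \<ge> 1 \<Longrightarrow> 0 \<le> j \<Longrightarrow> j < int n \<Longrightarrow> Bsg n j \<subseteq> carrier (Dic n)"
  by (auto simp: Bsg_def Dic_simps)

lemma fiber: assumes "n \<ge> 1" "0 \<le> i" "i < int n"
  shows "{j. 0 \<le> j \<and> j < int n \<and> int n dvd 2 * (i - j)} =
    (if odd n then {i} else {i, if 2 * i < int n then i + int n div 2 else i - int n div 2})"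
proof -
  have sd: "i - j = 0 \<or> 2 * (i - j) = int n \<or> 2 * (i - j) = - int n"
    if "0 \<le> j" "j < int n" "int n dvd 2 * (i - j)" for j
  proof -
    have "\<bar>i - j\<bar> < int n" using that assms by auto
    then show ?thesis using small_dvd[OF assms(1) _ that(3)] by blast
  qed
  show ?thesis
  proof (cases "odd n")
    case True
    have oi: "odd (int n)" using True by simp
    have jeq: "j = i" if "0 \<le> j" "j < int n" "int n dvd 2 * (i - j)" for j
    proof -
      have "2 * (i - j) \<noteq> int n"
      proof
        assume "2 * (i - j) = int n"
        then have "odd (2 * (i - j))" using oi by simp
        then show False by simp
      qed
      moreover have "2 * (i - j) \<noteq> - int n"
      proof
        assume "2 * (i - j) = - int n"
        then have "int n = 2 * (j - i)" by simp
        then have "odd (2 * (j - i))" using oi by simp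
        then show False by simp
      qed
      ultimately show ?thesis using sd[OF that] by simp
    qed
    have "{j. 0 \<le> j \<and> j < int n \<and> int n dvd 2 * (i - j)} = {i}"
    proof (rule equalityI; rule subsetI)
      fix j assume "j \<in> {j. 0 \<le> j \<and> j < int n \<and> int n dvd 2 * (i - j)}"
      then show "j \<in> {i}" using jeq by auto
    next
      fix j assume "j \<in> {i}"
      then show "j \<in> {j. 0 \<le> j \<and> j < int n \<and> int n dvd 2 * (i - j)}" using assms by auto
    qed
    then show ?thesis using True by simp
  next
    case False
    then obtain m where m: "int n = 2 * m" by (metis even_of_nat evenE)
    have dm: "int n div 2 = m" using m by simp
    have "{j. 0 \<le> j \<and> j < int n \<and> int n dvd 2 * (i - j)} = {i, if 2 * i < int n then i + m else i - m}"
    proof (rule equalityI; rule subsetI)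
      fix j assume j: "j \<in> {j. 0 \<le> j \<and> j < int n \<and> int n dvd 2 * (i - j)}"
      then have j1: "0 \<le> j" "j < int n" "int n dvd 2 * (i - j)" by auto
      have "i - j = 0 \<or> 2 * (i - j) = 2 * m \<or> 2 * (i - j) = - (2 * m)" using sd[OF j1] m by simp
      then have "j = i \<or> j = i - m \<or> j = i + m"
      proof (elim disjE)
        assume "i - j = 0" then show ?thesis by simp
      next
        assume "2 * (i - j) = 2 * m" then have "j = i - m" by simp then show ?thesis by simp
      next
        assume "2 * (i - j) = - (2 * m)" then have "j = i + m" by simp then show ?thesis by simp
      qed
      then consider "j = i" | "j = i - m" | "j = i + m" by blast
      then show "j \<in> {i, if 2 * i < int n then i + m else i - m}"
      proof cases
        case 1 then show ?thesis by simp
      next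
        case 2
        then have "\<not> 2 * i < int n" using j1 m by linarith
        then show ?thesis using 2 by simp
      next
        case 3
        then have "2 * i < int n" using j1 m by linarith
        then show ?thesis using 3 by simp
      qed
    next
      fix j assume j: "j \<in> {i, if 2 * i < int n then i + m else i - m}"
      have d1: "int n dvd 2 * (i - (i + m))" using m by simp
      have d2: "int n dvd 2 * (i - (i - m))" using m by simp
      show "j \<in> {j. 0 \<le> j \<and> j < int n \<and> int n dvd 2 * (i - j)}"
      proof (cases "j = i")
        case True then show ?thesis using assms by simp
      next
        case False
        show ?thesis
        proof (cases "2 * i < int n")
          case True
          then have "j = i + m" using j False by simp
          then show ?thesis using True d1 assms m by simp
        next
          case F2: False
          then have "j = i - m" using j False by simp
          then show ?thesis using F2 d2 assms m by simp
        qed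
      qed
    qed
    then show ?thesis using False dm by simp
  qed
qed

lemma card_fiber: assumes "n \<ge> 1" "0 \<le> i" "i < int n"
  shows "card {j. 0 \<le> j \<and> j < int n \<and> int n dvd 2 * (i - j)} = (if odd n then 1 else 2)"
proof (cases "odd n")
  case True then show ?thesis using fiber[OF assms] by simp
next
  case False
  then obtain m where m: "int n = 2 * m" by (metis even_of_nat evenE)
  have "m \<ge> 1" using m assms(1) by linarith
  then have "i \<noteq> (if 2 * i < int n then i + int n div 2 else i - int n div 2)" using m by auto
  then show ?thesis using fiber[OF assms] False by simp
qed

lemma card_P: assumes "n \<ge> 1"
  shows "card {(i, j). 0 \<le> i \<and> i < int n \<and> 0 \<le> j \<and> j < int n \<and> int n dvd 2 * (i - j)}
    = (if odd n then n else 2 * n)"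
proof -
  have "{(i, j). 0 \<le> i \<and> i < int n \<and> 0 \<le> j \<and> j < int n \<and> int n dvd 2 * (i - j)}
    = Sigma {0..<int n} (\<lambda>i. {j. 0 \<le> j \<and> j < int n \<and> int n dvd 2 * (i - j)})" by auto
  moreover have "card (Sigma {0..<int n} (\<lambda>i. {j. 0 \<le> j \<and> j < int n \<and> int n dvd 2 * (i - j)}))
     = (\<Sum>i\<in>{0..<int n}. card {j. 0 \<le> j \<and> j < int n \<and> int n dvd 2 * (i - j)})"
    by (rule card_SigmaI) (auto intro: finite_subset[of _ "{0..<int n}"])
  moreover have "\<dots> = (\<Sum>i\<in>{0..<int n}. (if odd n then 1 else 2))"
    using card_fiber[OF assms] by (intro sum.cong) auto
  ultimately show ?thesis by simp
qed




theorem theorem3p1: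
  fixes n :: nat
  assumes "n \<ge> 1"
  shows "csd (Dic n) =
    (if odd n
     then (real (tau (2*n)) * (real (tau (2*n)) + real n) + real n * (real (tau (2*n)) + 1))
            / (real (tau (2*n)) + real n) ^ 2
     else (real (tau (2*n)) * (real (tau (2*n)) + real n) + real n * (real (tau (2*n)) + 2))
            / (real (tau (2*n)) + real n) ^ 2)"
proof -
  define AS where "AS = Asg n ` Dv n"
  define BS where "BS = Bsg n ` {0..<int n}"
  define C where "C = AS \<union> BS"
  define P where "P = {(i, j). 0 \<le> i \<and> i < int n \<and> 0 \<le> j \<and> j < int n \<and> int n dvd 2 * (i - j)}"
  define f where "f = (\<lambda>(i, j). (Bsg n i, Bsg n j))"
  define t where "t = tau (2 * n)"
  have CS: "cyclic_subgroups (Dic n) = C" using cyc_eq[OF assms] by (simp add: C_def AS_def BS_def)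
  have fA: "finite AS" using Dv_finite[OF assms] by (simp add: AS_def)
  have fB: "finite BS" by (simp add: BS_def)
  have fC: "finite C" using fA fB by (simp add: C_def)
  have fP: "finite P"
    by (rule finite_subset[of _ "{0..<int n} \<times> {0..<int n}"]) (auto simp: P_def)
  have cA: "card AS = t" using Asg_inj[OF assms] card_Dv by (simp add: AS_def t_def card_image)
  have cB: "card BS = n" using Bsg_inj by (simp add: BS_def card_image)
  have dAB: "AS \<inter> BS = {}" using AB_disj by (simp add: AS_def BS_def)
  have cC: "card C = t + n" using card_Un_disjoint[OF fA fB dAB] cA cB by (simp add: C_def)
  have Csub: "K \<subseteq> carrier (Dic n)" if "K \<in> C" for K
  proof -
    from that consider d where "K = Asg n d" | j where "0 \<le> j" "j < int n" "K = Bsg n j"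
      by (auto simp: C_def AS_def BS_def)
    then show ?thesis
    proof cases
      case 1 then show ?thesis using Asg_carrier by simp
    next
      case 2 then show ?thesis using Bsg_carrier[OF assms 2(1,2)] by simp
    qed
  qed
  have injf: "inj_on f P"
  proof (rule inj_onI)
    fix x y assume xy: "x \<in> P" "y \<in> P" "f x = f y"
    obtain i j i' j' where x: "x = (i, j)" and y: "y = (i', j')" by (metis prod.exhaust)
    have "Bsg n i = Bsg n i'" "Bsg n j = Bsg n j'" using xy(3) by (auto simp: f_def x y)
    then show "x = y" using Bsg_inj xy(1,2) by (auto simp: x y P_def inj_on_def)
  qed
  have cP: "card (f ` P) = (if odd n then n else 2 * n)"
    using card_image[OF injf] card_P[OF assms] by (simp add: P_def)
  have Comm: "{(H, K). H \<in> C \<and> K \<in> C \<and> set_mult (Dic n) H K = set_mult (Dic n) K H}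
      = (AS \<times> C \<union> BS \<times> AS) \<union> f ` P"
  proof (rule equalityI; rule subsetI)
    fix x assume x: "x \<in> {(H, K). H \<in> C \<and> K \<in> C \<and> set_mult (Dic n) H K = set_mult (Dic n) K H}"
    then obtain H K where xe: "x = (H, K)" and HK: "H \<in> C" "K \<in> C" "set_mult (Dic n) H K = set_mult (Dic n) K H"
      by auto
    show "x \<in> (AS \<times> C \<union> BS \<times> AS) \<union> f ` P"
    proof (cases "H \<in> AS \<or> K \<in> AS")
      case True then show ?thesis using HK xe by (auto simp: C_def)
    next
      case False
      then have "H \<in> BS" "K \<in> BS" using HK by (auto simp: C_def)
      then obtain i j where ij: "0 \<le> i" "i < int n" "0 \<le> j" "j < int n" "H = Bsg n i" "K = Bsg n j"
        by (auto simp: BS_def)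
      then have "(i, j) \<in> P" using B_comm_iff[OF assms ij(1-4)] HK(3) by (simp add: P_def)
      then have "x \<in> f ` P" using xe ij by (force simp: f_def)
      then show ?thesis by blast
    qed
  next
    fix x assume x: "x \<in> (AS \<times> C \<union> BS \<times> AS) \<union> f ` P"
    then consider "x \<in> AS \<times> C" | "x \<in> BS \<times> AS" | "x \<in> f ` P" by blast
    then show "x \<in> {(H, K). H \<in> C \<and> K \<in> C \<and> set_mult (Dic n) H K = set_mult (Dic n) K H}"
    proof cases
      case 1
      then obtain d K where "d \<in> Dv n" "K \<in> C" "x = (Asg n d, K)" by (auto simp: AS_def)
      moreover have "Asg n d \<in> C" using \<open>d \<in> Dv n\<close> by (simp add: C_def AS_def)
      ultimately show ?thesis using A_comm[of d n K] Csub by (auto simp: Dv_def)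
    next
      case 2
      then obtain d H where "d \<in> Dv n" "H \<in> BS" "x = (H, Asg n d)" by (auto simp: AS_def)
      moreover have "Asg n d \<in> C" using \<open>d \<in> Dv n\<close> by (simp add: C_def AS_def)
      moreover have "H \<in> C" using \<open>H \<in> BS\<close> by (simp add: C_def)
      ultimately show ?thesis using A_comm[of d n H] Csub by (auto simp: Dv_def)
    next
      case 3
      then obtain i j where ij: "(i, j) \<in> P" "x = (Bsg n i, Bsg n j)" by (auto simp: f_def)
      then have ij2: "0 \<le> i" "i < int n" "0 \<le> j" "j < int n" "int n dvd 2 * (i - j)" by (auto simp: P_def)
      have "Bsg n i \<in> C" "Bsg n j \<in> C" using ij2 by (auto simp: C_def BS_def)
      then show ?thesis using ij(2) B_comm_iff[OF assms ij2(1-4)] ij2(5) by simp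
    qed
  qed
  have d1: "(AS \<times> C) \<inter> (BS \<times> AS) = {}" using dAB by auto
  have fPsub: "f ` P \<subseteq> BS \<times> BS" by (auto simp: f_def P_def BS_def)
  have d2: "(AS \<times> C \<union> BS \<times> AS) \<inter> f ` P = {}" using dAB fPsub by blast
  have "card ((AS \<times> C \<union> BS \<times> AS) \<union> f ` P) = card (AS \<times> C) + card (BS \<times> AS) + card (f ` P)"
    using card_Un_disjoint[OF _ _ d2] card_Un_disjoint[OF _ _ d1] fA fB fC fP by simp
  also have "\<dots> = t * (t + n) + n * t + (if odd n then n else 2 * n)"
    using cA cB cC cP by (simp add: card_cartesian_product)
  finally have cnt: "card {(H, K). H \<in> C \<and> K \<in> C \<and> set_mult (Dic n) H K = set_mult (Dic n) K H}
      = t * (t + n) + n * t + (if odd n then n else 2 * n)" using Comm by simp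
  have "csd (Dic n) = real (t * (t + n) + n * t + (if odd n then n else 2 * n)) / real (t + n) ^ 2"
    unfolding csd_def CS cnt cC by simp
  then show ?thesis by (simp add: t_def algebra_simps)
qed


end
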